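(* The class of betweenness frames is not sufficiency axiomatic; that is, there is no set $\Gamma$ of formulas in the language with a binary sufficiency operator $[\![\cdot,\cdot]\!]$ such that a 3-frame belongs to the class of betweenness frames if and only if every formula of $\Gamma$ is valid on it.
   Context: A 3-frame is a pair $\langle U,B\rangle$ with $U$ a non-empty set and $B\subseteq U^3$. It is a betweenness frame if for all $a,b,c\in U$: (BT0) $B(a,a,a)$; (BT1) $B(a,b,c)\Rightarrow B(c,b,a)$; (BT2) $B(a,b,c)\Rightarrow B(a,a,b)$; (BT3) $B(a,b,c)\wedge B(a,c,b)\Rightarrow b=c$. Formulas of the sufficiency language are built from propositional variables with Boolean connectives and a binary operator $[\![\varphi,\psi]\!]$. In a model on a 3-frame $\langle U,B\rangle$ (a valuation of variables as subsets of $U$, Boolean connectives interpreted classically), $x\Vdash[\![\varphi,\psi]\!]$ iff for all $y,z\in U$, if $y\Vdash\varphi$ and $z\Vdash\psi$ then $B(y,x,z)$. A formula is valid on a frame if it holds at every point under every valuation. A class of 3-frames is sufficiency axiomatic if it is the class of all 3-frames on which all formulas of some set $\Gamma$ are valid. *)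

theory Defs
  imports Main
begin

datatype fm =
    Var nat
  | Bot
  | Neg fm
  | Conj fm fm
  | Disj fm fm
  | Impl fm fm
  | Suff fm fm

definition three_frame :: "'a set \<Rightarrow> ('a \<times> 'a \<times> 'a) set \<Rightarrow> bool" where
  "three_frame U B \<longleftrightarrow> U \<noteq> {} \<and> B \<subseteq> U \<times> U \<times> U"

definition betweenness_frame :: "'a set \<Rightarrow> ('a \<times> 'a \<times> 'a) set \<Rightarrow> bool" where
  "betweenness_frame U B \<longleftrightarrow> three_frame U B \<and>
     (\<forall>a\<in>U. \<forall>b\<in>U. \<forall>c\<in>U.
        (a, a, a) \<in> B \<and>
        ((a, b, c) \<in> B \<longrightarrow> (c, b, a) \<in> B) \<and>
        ((a, b, c) \<in> B \<longrightarrow> (a, a, b) \<in> B) \<and>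
        ((a, b, c) \<in> B \<and> (a, c, b) \<in> B \<longrightarrow> b = c))"

fun sat :: "'a set \<Rightarrow> ('a \<times> 'a \<times> 'a) set \<Rightarrow> (nat \<Rightarrow> 'a set) \<Rightarrow> 'a \<Rightarrow> fm \<Rightarrow> bool" where
  "sat U B v x (Var p) = (x \<in> v p)"
| "sat U B v x Bot = False"
| "sat U B v x (Neg f) = (\<not> sat U B v x f)"
| "sat U B v x (Conj f g) = (sat U B v x f \<and> sat U B v x g)"
| "sat U B v x (Disj f g) = (sat U B v x f \<or> sat U B v x g)"
| "sat U B v x (Impl f g) = (sat U B v x f \<longrightarrow> sat U B v x g)"
| "sat U B v x (Suff f g) =
     (\<forall>y\<in>U. \<forall>z\<in>U. sat U B v y f \<and> sat U B v z g \<longrightarrow> (y, x, z) \<in> B)"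

definition valid :: "'a set \<Rightarrow> ('a \<times> 'a \<times> 'a) set \<Rightarrow> fm \<Rightarrow> bool" where
  "valid U B f \<longleftrightarrow> (\<forall>v. (\<forall>p. v p \<subseteq> U) \<longrightarrow> (\<forall>x\<in>U. sat U B v x f))"

end

theory Submission
  imports Defs
begin

definition UG :: "nat set" where "UG = {0,1}"
definition BG :: "(nat \<times> nat \<times> nat) set" where "BG = {(0,0,0),(1,1,1)}"

lemma transfer_sat:
  fixes v :: "nat \<Rightarrow> nat set"
  shows "x \<in> UG \<Longrightarrow> sat UG BG (\<lambda>p. if 0 \<in> v p then UG else {}) x f = sat {0::nat} {} v 0 f"
proof (induction f arbitrary: x)
  case (Suff f1 f2)
  have "\<not> (\<forall>y\<in>UG. \<forall>z\<in>UG. (y, x, z) \<in> BG)"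
    using Suff.prems by (auto simp: UG_def BG_def)
  then show ?case using Suff by (auto simp: UG_def)
qed (auto simp: UG_def)

lemma transfer_valid:
  assumes "valid UG BG f" shows "valid {0::nat} {} f"
  unfolding valid_def
proof (intro allI impI ballI)
  fix v :: "nat \<Rightarrow> nat set" and x assume "\<forall>p. v p \<subseteq> {0}" "x \<in> {0::nat}"
  have "sat UG BG (\<lambda>p. if 0 \<in> v p then UG else {}) 0 f"
    using assms unfolding valid_def by (auto simp: UG_def)
  then show "sat {0} {} v x f" using transfer_sat[of 0 v f] \<open>x \<in> {0}\<close> by (simp add: UG_def)
qed

theorem theorem19:
  fixes \<Gamma> :: "fm set"
  shows "\<exists>(U :: nat set) B. three_frame U B \<and>
           \<not> (betweenness_frame U B \<longleftrightarrow> (\<forall>f\<in>\<Gamma>. valid U B f))"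
proof (cases "\<forall>f\<in>\<Gamma>. valid {0::nat} {} f")
  case True
  have "three_frame {0::nat} {}" by (simp add: three_frame_def)
  moreover have "\<not> betweenness_frame {0::nat} {}" by (simp add: betweenness_frame_def)
  ultimately show ?thesis using True by blast
next
  case False
  then have "\<not> (\<forall>f\<in>\<Gamma>. valid UG BG f)" using transfer_valid by blast
  moreover have "three_frame UG BG" by (auto simp: three_frame_def UG_def BG_def)
  moreover have "betweenness_frame UG BG" by (auto simp: betweenness_frame_def three_frame_def UG_def BG_def)
  ultimately show ?thesis by blast
qed

end
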